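(* Let $\mathcal{P}=\{\mathbb{P}_n\}_{n\ge1}$ and $\mathcal{P}'=\{\mathbb{P}'_n\}_{n\ge1}$ be families of probability measures, $\mathbb{P}_n,\mathbb{P}'_n$ on $\mathbb{R}^n$. If $\mathcal{P}'$ has exponential Fisher separability and $\mathcal{P}'$ dominates $\mathcal{P}$, then $\mathcal{P}$ has exponential Fisher separability.
   Context: $\mathcal{P}'$ dominates $\mathcal{P}$ if there is a constant $C$ such that $\mathbb{P}_n(S)\le C\,\mathbb{P}'_n(S)$ for all $n$ and all measurable $S\subset\mathbb{R}^n$. A family $\{\mathbb{P}_n\}$ has exponential Fisher separability if there exist constants $a>0$, $b\in(0,1)$ such that for all $n$, if $\boldsymbol{x},\boldsymbol{y}$ are i.i.d. with law $\mathbb{P}_n$, then $(\boldsymbol{x},\boldsymbol{x})>(\boldsymbol{x},\boldsymbol{y})$ with probability at least $1-ab^n$ ($(\cdot,\cdot)$ the Euclidean inner product). *)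

theory Defs
  imports "HOL-Probability.Probability"
begin

text \<open>R^n is modelled as functions nat => real restricted to the index set {..<n}
  (the product measurable space PiM {..<n} borel, i.e. the Borel sets of R^n).\<close>

definition euclid_sp :: "nat \<Rightarrow> (nat \<Rightarrow> real) measure" where
  "euclid_sp n = PiM {..<n} (\<lambda>_. borel)"

definition ip :: "nat \<Rightarrow> (nat \<Rightarrow> real) \<Rightarrow> (nat \<Rightarrow> real) \<Rightarrow> real" where
  "ip n x y = (\<Sum>i<n. x i * y i)"

definition prob_family :: "(nat \<Rightarrow> (nat \<Rightarrow> real) measure) \<Rightarrow> bool" where
  "prob_family P \<longleftrightarrow> (\<forall>n\<ge>1. prob_space (P n) \<and> sets (P n) = sets (euclid_sp n))"

definition dominates :: "(nat \<Rightarrow> (nat \<Rightarrow> real) measure) \<Rightarrow> (nat \<Rightarrow> (nat \<Rightarrow> real) measure) \<Rightarrow> bool" where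
  "dominates P' P \<longleftrightarrow>
     (\<exists>C::real. \<forall>n\<ge>1. \<forall>S \<in> sets (P n). measure (P n) S \<le> C * measure (P' n) S)"

definition exp_fisher_sep :: "(nat \<Rightarrow> (nat \<Rightarrow> real) measure) \<Rightarrow> bool" where
  "exp_fisher_sep P \<longleftrightarrow>
     (\<exists>a::real. \<exists>b::real. a > 0 \<and> 0 < b \<and> b < 1 \<and>
        (\<forall>n\<ge>1. measure (P n \<Otimes>\<^sub>M P n)
                   {z \<in> space (P n \<Otimes>\<^sub>M P n). ip n (fst z) (snd z) < ip n (fst z) (fst z)}
                 \<ge> 1 - a * b ^ n))"

end

theory Submission
  imports Defs
begin

lemma pair_dom:
  assumes sM: "sets M = sets M'" and sN: "sets N = sets N'"
    and fN: "sigma_finite_measure N"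
    and dM: "\<And>A. A \<in> sets M \<Longrightarrow> emeasure M A \<le> c * emeasure M' A"
    and dN: "\<And>A. A \<in> sets N \<Longrightarrow> emeasure N A \<le> d * emeasure N' A"
    and fN': "sigma_finite_measure N'"
    and X: "X \<in> sets (M \<Otimes>\<^sub>M N)"
  shows "emeasure (M \<Otimes>\<^sub>M N) X \<le> c * d * emeasure (M' \<Otimes>\<^sub>M N') X"
proof -
  have sP: "sets (M \<Otimes>\<^sub>M N) = sets (M' \<Otimes>\<^sub>M N')"
    by (rule sets_pair_measure_cong[OF sM sN])
  have X': "X \<in> sets (M' \<Otimes>\<^sub>M N')" using X sP by simp
  have spM: "space M = space M'" using sM by (rule sets_eq_imp_space_eq)
  have "emeasure (M \<Otimes>\<^sub>M N) X = (\<integral>\<^sup>+ x. emeasure N (Pair x -` X) \<partial>M)"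
    using sigma_finite_measure.emeasure_pair_measure_alt[OF fN X] .
  also have "\<dots> \<le> (\<integral>\<^sup>+ x. d * emeasure N' (Pair x -` X) \<partial>M)"
    by (rule nn_integral_mono) (rule dN, rule sets_Pair1[OF X])
  also have "\<dots> \<le> (\<integral>\<^sup>+ x. d * emeasure N' (Pair x -` X) \<partial>scale_measure c M')"
  proof (rule nn_integral_mono_measure)
    show "sets M = sets (scale_measure c M')" using sM by simp
    show "M \<le> scale_measure c M'"
      unfolding le_measure_iff using sM spM dM
      by (auto simp: space_scale_measure le_fun_def)
        (metis dM emeasure_notin_sets sM zero_le)
  qed
  also have "\<dots> = c * (\<integral>\<^sup>+ x. d * emeasure N' (Pair x -` X) \<partial>M')"
    by (rule nn_integral_scale_measure)
      (intro borel_measurable_times_ennreal borel_measurable_const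
        sigma_finite_measure.measurable_emeasure_Pair[OF fN' X'])
  also have "\<dots> = c * d * (\<integral>\<^sup>+ x. emeasure N' (Pair x -` X) \<partial>M')"
    by (subst nn_integral_cmult)
      (auto intro: sigma_finite_measure.measurable_emeasure_Pair[OF fN' X'] simp: mult.assoc)
  also have "\<dots> = c * d * emeasure (M' \<Otimes>\<^sub>M N') X"
    using sigma_finite_measure.emeasure_pair_measure_alt[OF fN' X'] by simp
  finally show ?thesis .
qed


lemma good_meas:
  assumes "sets M = sets (euclid_sp n)"
  shows "{z \<in> space (M \<Otimes>\<^sub>M M). ip n (fst z) (snd z) < ip n (fst z) (fst z)} \<in> sets (M \<Otimes>\<^sub>M M)"
proof -
  have e: "sets (M \<Otimes>\<^sub>M M) = sets (euclid_sp n \<Otimes>\<^sub>M euclid_sp n)"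
    by (rule sets_pair_measure_cong[OF assms assms])
  have sp: "space (M \<Otimes>\<^sub>M M) = space (euclid_sp n \<Otimes>\<^sub>M euclid_sp n)"
    by (rule sets_eq_imp_space_eq[OF e])
  have "{z \<in> space (euclid_sp n \<Otimes>\<^sub>M euclid_sp n). ip n (fst z) (snd z) < ip n (fst z) (fst z)}
        \<in> sets (euclid_sp n \<Otimes>\<^sub>M euclid_sp n)"
    unfolding ip_def euclid_sp_def by measurable
  then show ?thesis using e sp by simp
qed

theorem theorem5:
  fixes P P' :: "nat \<Rightarrow> (nat \<Rightarrow> real) measure"
  assumes "prob_family P" and "prob_family P'"
    and "exp_fisher_sep P'" and "dominates P' P"
  shows "exp_fisher_sep P"
proof -
  obtain a b where ab: "a > 0" "0 < b" "b < 1" and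
    F: "\<And>n. n \<ge> 1 \<Longrightarrow> measure (P' n \<Otimes>\<^sub>M P' n)
                   {z \<in> space (P' n \<Otimes>\<^sub>M P' n). ip n (fst z) (snd z) < ip n (fst z) (fst z)}
                 \<ge> 1 - a * b ^ n"
    using assms(3) unfolding exp_fisher_sep_def by blast
  obtain C :: real where C: "\<And>n S. n \<ge> 1 \<Longrightarrow> S \<in> sets (P n) \<Longrightarrow> measure (P n) S \<le> C * measure (P' n) S"
    using assms(4) unfolding dominates_def by blast
  have C1: "C \<ge> 1"
  proof -
    interpret p: prob_space "P 1" using assms(1) unfolding prob_family_def by auto
    interpret p': prob_space "P' 1" using assms(2) unfolding prob_family_def by auto
    have "space (P 1) = space (P' 1)"
      using assms(1,2) unfolding prob_family_def
      by (metis le_refl sets_eq_imp_space_eq)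
    then have sm: "space (P 1) \<in> sets (P 1)" "measure (P' 1) (space (P 1)) = 1"
      using sets.top[of "P 1"] p'.prob_space by auto
    have "1 \<le> C * measure (P' 1) (space (P 1))"
      using C[of 1 "space (P 1)", OF _ sm(1)] p.prob_space by simp
    then have "1 \<le> C * 1" using sm(2) by simp
    then show ?thesis by simp
  qed
  show ?thesis unfolding exp_fisher_sep_def
  proof (rule exI[of _ "C*C*a"], rule exI[of _ b], intro conjI allI impI)
    show "C*C*a > 0" using C1 ab by simp
  next
    show "0 < b" using ab by auto
  next
    show "b < 1" using ab by auto
  next
    fix n :: nat assume n: "n \<ge> 1"
    interpret p: prob_space "P n" using assms(1) n unfolding prob_family_def by auto
    interpret p': prob_space "P' n" using assms(2) n unfolding prob_family_def by auto
    interpret pp: pair_prob_space "P n" "P n" by unfold_locales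
    interpret pp': pair_prob_space "P' n" "P' n" by unfold_locales
    have sP: "sets (P n) = sets (euclid_sp n)" using assms(1) n unfolding prob_family_def by auto
    have sP': "sets (P' n) = sets (euclid_sp n)" using assms(2) n unfolding prob_family_def by auto
    have sPP: "sets (P n) = sets (P' n)" using sP sP' by simp
    have e: "sets (P n \<Otimes>\<^sub>M P n) = sets (P' n \<Otimes>\<^sub>M P' n)"
      by (rule sets_pair_measure_cong[OF sPP sPP])
    have sp: "space (P n \<Otimes>\<^sub>M P n) = space (P' n \<Otimes>\<^sub>M P' n)"
      by (rule sets_eq_imp_space_eq[OF e])
    define G where "G = {z \<in> space (P n \<Otimes>\<^sub>M P n). ip n (fst z) (snd z) < ip n (fst z) (fst z)}"
    have G': "G = {z \<in> space (P' n \<Otimes>\<^sub>M P' n). ip n (fst z) (snd z) < ip n (fst z) (fst z)}"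
      unfolding G_def sp ..
    have Gm: "G \<in> sets (P n \<Otimes>\<^sub>M P n)" unfolding G_def by (rule good_meas[OF sP])
    define B where "B = space (P n \<Otimes>\<^sub>M P n) - G"
    have Bm: "B \<in> sets (P n \<Otimes>\<^sub>M P n)" unfolding B_def using Gm by auto
    have Bm': "B \<in> sets (P' n \<Otimes>\<^sub>M P' n)" using Bm e by simp
    have Gm': "G \<in> sets (P' n \<Otimes>\<^sub>M P' n)" using Gm e by simp
    have dom: "\<And>A. A \<in> sets (P n) \<Longrightarrow> emeasure (P n) A \<le> ennreal C * emeasure (P' n) A"
    proof -
      fix A assume A: "A \<in> sets (P n)"
      have "emeasure (P n) A = ennreal (measure (P n) A)" by (simp add: p.emeasure_eq_measure)
      also have "\<dots> \<le> ennreal (C * measure (P' n) A)" using C[OF n A] by (rule ennreal_leI)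
      also have "\<dots> = ennreal C * emeasure (P' n) A"
        using C1 by (simp add: p'.emeasure_eq_measure ennreal_mult)
      finally show "emeasure (P n) A \<le> ennreal C * emeasure (P' n) A" .
    qed
    have "emeasure (P n \<Otimes>\<^sub>M P n) B \<le> ennreal C * ennreal C * emeasure (P' n \<Otimes>\<^sub>M P' n) B"
      by (rule pair_dom[OF sPP sPP _ dom dom _ Bm]) (unfold_locales)
    hence mB: "measure (P n \<Otimes>\<^sub>M P n) B \<le> C * C * measure (P' n \<Otimes>\<^sub>M P' n) B"
      using C1 by (simp add: pp.P.emeasure_eq_measure pp'.P.emeasure_eq_measure
          ennreal_mult[symmetric] ennreal_le_iff)
    have B': "B = space (P' n \<Otimes>\<^sub>M P' n) - G" unfolding B_def sp ..
    have m1: "measure (P n \<Otimes>\<^sub>M P n) G = 1 - measure (P n \<Otimes>\<^sub>M P n) B"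
      unfolding B_def using pp.P.prob_compl[OF Gm] by simp
    have m2: "measure (P' n \<Otimes>\<^sub>M P' n) B = 1 - measure (P' n \<Otimes>\<^sub>M P' n) G"
      unfolding B' using pp'.P.prob_compl[OF Gm'] by simp
    have "measure (P' n \<Otimes>\<^sub>M P' n) G \<ge> 1 - a * b ^ n" using F[OF n] G' by simp
    hence "measure (P' n \<Otimes>\<^sub>M P' n) B \<le> a * b ^ n" using m2 by simp
    hence "C * C * measure (P' n \<Otimes>\<^sub>M P' n) B \<le> C * C * (a * b ^ n)"
      using C1 by (intro mult_left_mono) auto
    then show "1 - C * C * a * b ^ n \<le> measure (P n \<Otimes>\<^sub>M P n)
      {z \<in> space (P n \<Otimes>\<^sub>M P n). ip n (fst z) (snd z) < ip n (fst z) (fst z)}"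
      using m1 mB unfolding G_def[symmetric] by (simp add: mult.assoc)
  qed
qed

end
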